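(* Let $G=(V,E)$ be a finite graph and let $\xi$ be an integer-valued random variable such that the random permutation has cycle length bounded by $\xi$ on $(V,E)$. Let $(\xi_n)_{n\in\mathbb N}$ be independent copies of $\xi$. Then for each $A \subset V$ and each $\ell \in \mathbb N$, $$\mathbb P_V(|\mathrm{Or}(A)| \geq \ell) \leq \mathbb P\Big(\sum_{i=1}^{|A|} \xi_i \geq \ell\Big).$$
   Context: For $U\subset V$, $\mathcal S_U$ is the set of bijections $\pi:U\to U$ with $\pi(x)=x$ or $\{x,\pi(x)\}\in E$; $\mathbb P_U(\pi)=e^{-\alpha\sum_{x\in U}\mathbb 1\{\pi(x)\neq x\}}/Z(U)$. $\gamma_x$ is the cycle of $\pi$ containing $x$ and $|\gamma_x|$ its number of vertices. The random permutation has cycle length bounded by $\xi$ on $(V,E)$ if for all $\ell\ge1$, $\sup_{U\subset V\text{ finite}}\sup_{x\in U}\mathbb P_U(|\gamma_x|\ge\ell)\le\mathbb P(\xi\ge\ell)$. $\mathrm{Or}(A)=\mathrm{Or}_\pi(A)=\{\pi^j(x):x\in A,j\in\mathbb N\}$. *)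

theory Defs
  imports "HOL-Probability.Probability" "HOL-Combinatorics.Permutations"
begin

definition adm_perms :: "'a set set \<Rightarrow> 'a set \<Rightarrow> ('a \<Rightarrow> 'a) set" where
  "adm_perms E U = {\<pi>. \<pi> permutes U \<and> (\<forall>x\<in>U. \<pi> x = x \<or> {x, \<pi> x} \<in> E)}"

definition perm_weight :: "real \<Rightarrow> 'a set \<Rightarrow> ('a \<Rightarrow> 'a) \<Rightarrow> real" where
  "perm_weight \<alpha> U \<pi> = exp (- \<alpha> * real (card {x\<in>U. \<pi> x \<noteq> x}))"

definition part_fun :: "real \<Rightarrow> 'a set set \<Rightarrow> 'a set \<Rightarrow> real" where
  "part_fun \<alpha> E U = (\<Sum>\<pi>\<in>adm_perms E U. perm_weight \<alpha> U \<pi>)"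

definition perm_prob :: "real \<Rightarrow> 'a set set \<Rightarrow> 'a set \<Rightarrow> (('a \<Rightarrow> 'a) \<Rightarrow> bool) \<Rightarrow> real" where
  "perm_prob \<alpha> E U Q =
     (\<Sum>\<pi>\<in>{\<pi>\<in>adm_perms E U. Q \<pi>}. perm_weight \<alpha> U \<pi>) / part_fun \<alpha> E U"

definition cycle_of :: "('a \<Rightarrow> 'a) \<Rightarrow> 'a \<Rightarrow> 'a set" where
  "cycle_of \<pi> x = {(\<pi> ^^ j) x | j. True}"

definition Or :: "('a \<Rightarrow> 'a) \<Rightarrow> 'a set \<Rightarrow> 'a set" where
  "Or \<pi> A = {(\<pi> ^^ j) x | x j. x \<in> A}"

definition cycle_length_bounded :: "real \<Rightarrow> 'a set \<Rightarrow> 'a set set \<Rightarrow> int pmf \<Rightarrow> bool" where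
  "cycle_length_bounded \<alpha> V E \<xi> \<longleftrightarrow>
     (\<forall>l::nat. l \<ge> 1 \<longrightarrow>
        (\<forall>U. U \<subseteq> V \<longrightarrow> finite U \<longrightarrow>
          (\<forall>x\<in>U. perm_prob \<alpha> E U (\<lambda>\<pi>. card (cycle_of \<pi> x) \<ge> l)
                   \<le> measure_pmf.prob \<xi> {k. k \<ge> int l})))"

text \<open>Law of xi_1 + ... + xi_n for independent copies xi_i of xi.\<close>
fun iid_sum :: "int pmf \<Rightarrow> nat \<Rightarrow> int pmf" where
  "iid_sum \<xi> 0 = return_pmf 0"
| "iid_sum \<xi> (Suc n) = bind_pmf \<xi> (\<lambda>a. map_pmf (\<lambda>s. a + s) (iid_sum \<xi> n))"

end

theory Submission
  imports Defs
begin

definition rs :: "'a set \<Rightarrow> ('a \<Rightarrow> 'a) \<Rightarrow> 'a \<Rightarrow> 'a" where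
  "rs S \<pi> = (\<lambda>y. if y \<in> S then \<pi> y else y)"

lemma funpow_agree:
  assumes "\<forall>y\<in>S. p y = q y" "q ` S \<subseteq> S" "x \<in> S"
  shows "(p^^j) x = (q^^j) x \<and> (q^^j) x \<in> S"
  using assms by (induction j) auto

lemma funpow_in:
  assumes "q ` S \<subseteq> S" "x \<in> S"
  shows "(q^^j) x \<in> S"
  using funpow_agree[of S q q x j] assms by auto

lemma cycle_sub: "\<pi> permutes U \<Longrightarrow> x \<in> U \<Longrightarrow> cycle_of \<pi> x \<subseteq> U"
  unfolding cycle_of_def using funpow_in[of \<pi> U x] permutes_image[of \<pi> U] by auto

lemma self_in_cycle: "x \<in> cycle_of \<pi> x"
  unfolding cycle_of_def by (auto intro: exI[of _ 0])

lemma Or_sub: "\<pi> permutes U \<Longrightarrow> A \<subseteq> U \<Longrightarrow> Or \<pi> A \<subseteq> U"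
  unfolding Or_def using funpow_in[of \<pi> U] permutes_image[of \<pi> U] by auto

lemma cycle_img_sub: "\<pi> ` cycle_of \<pi> x \<subseteq> cycle_of \<pi> x"
proof
  fix z assume "z \<in> \<pi> ` cycle_of \<pi> x"
  then obtain j where "z = \<pi> ((\<pi>^^j) x)" unfolding cycle_of_def by auto
  hence "z = (\<pi>^^(Suc j)) x" by simp
  thus "z \<in> cycle_of \<pi> x" unfolding cycle_of_def by blast
qed

lemma cycle_img:
  assumes "\<pi> permutes U" "finite U" "x \<in> U"
  shows "\<pi> ` cycle_of \<pi> x = cycle_of \<pi> x"
proof (rule endo_inj_surj)
  show "finite (cycle_of \<pi> x)" using cycle_sub[OF assms(1,3)] assms(2) finite_subset by blast
  show "\<pi> ` cycle_of \<pi> x \<subseteq> cycle_of \<pi> x" by (rule cycle_img_sub)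
  show "inj_on \<pi> (cycle_of \<pi> x)" using permutes_inj[OF assms(1)] inj_on_subset by blast
qed

lemma compl_img:
  assumes "\<pi> permutes U" "\<pi> ` C = C"
  shows "\<pi> ` (U - C) = U - C"
  using permutes_image[OF assms(1)] assms(2) permutes_inj[OF assms(1)]
  by (metis image_set_diff)

lemma rs_permutes:
  assumes "\<pi> permutes U" "S \<subseteq> U" "\<pi> ` S = S"
  shows "rs S \<pi> permutes S"
proof (rule bij_imp_permutes)
  have "bij_betw \<pi> S S" using assms permutes_inj[OF assms(1)] inj_on_subset
    by (simp add: bij_betw_def inj_on_subset[of \<pi> UNIV S])
  thus "bij_betw (rs S \<pi>) S S" by (rule bij_betw_cong[THEN iffD1, rotated]) (simp add: rs_def)
  show "\<And>x. x \<notin> S \<Longrightarrow> rs S \<pi> x = x" by (simp add: rs_def)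
qed

lemma finite_adm: "finite U \<Longrightarrow> finite (adm_perms E U)"
  unfolding adm_perms_def by (rule finite_subset[OF _ finite_permutations[of U]]) auto

lemma weight_pos: "perm_weight \<alpha> U \<pi> > 0"
  unfolding perm_weight_def by simp

lemma id_adm: "id \<in> adm_perms E U"
  unfolding adm_perms_def by (auto simp: permutes_id)

lemma part_fun_pos: "finite U \<Longrightarrow> part_fun \<alpha> E U > 0"
  unfolding part_fun_def
  by (rule sum_pos2[OF finite_adm id_adm]) (auto simp: weight_pos less_imp_le)

lemma rs_adm:
  assumes "\<pi> \<in> adm_perms E U" "S \<subseteq> U" "\<pi> ` S = S"
  shows "rs S \<pi> \<in> adm_perms E S"
  using assms rs_permutes[of \<pi> U S] unfolding adm_perms_def by (auto simp: rs_def)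

lemma markov:
  assumes fin: "finite U" and xU: "x \<in> U" and CU: "C \<subseteq> U"
  shows "(\<Sum>\<pi>\<in>{\<pi>\<in>adm_perms E U. cycle_of \<pi> x = C}. perm_weight \<alpha> U \<pi> * G (rs (U-C) \<pi>))
       = (\<Sum>\<sigma>\<in>{\<sigma>\<in>adm_perms E C. cycle_of \<sigma> x = C}. perm_weight \<alpha> C \<sigma>)
         * (\<Sum>\<rho>\<in>adm_perms E (U-C). perm_weight \<alpha> (U-C) \<rho> * G \<rho>)"
proof -
  define T where "T = {\<sigma>\<in>adm_perms E C. cycle_of \<sigma> x = C}"
  define R where "R = adm_perms E (U-C)"
  define SC where "SC = {\<pi>\<in>adm_perms E U. cycle_of \<pi> x = C}"
  define mg where "mg = (\<lambda>(\<sigma>::'a\<Rightarrow>'a,\<rho>::'a\<Rightarrow>'a). (\<lambda>y. if y \<in> C then \<sigma> y else \<rho> y))"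
  define sp where "sp = (\<lambda>\<pi>. (rs C \<pi>, rs (U-C) \<pi>))"
  have finC: "finite C" using fin CU finite_subset by blast
  have mgprops: "mg p \<in> SC \<and> rs (U-C) (mg p) = snd p
     \<and> perm_weight \<alpha> U (mg p) = perm_weight \<alpha> C (fst p) * perm_weight \<alpha> (U-C) (snd p)
     \<and> sp (mg p) = p" if "p \<in> T \<times> R" for p
  proof -
    obtain \<sigma> \<rho> where p: "p = (\<sigma>,\<rho>)" by force
    have \<sigma>T: "\<sigma> \<in> T" and \<rho>R: "\<rho> \<in> R" using that p by auto
    have sp: "\<sigma> permutes C" and \<rho>p: "\<rho> permutes (U-C)" using \<sigma>T \<rho>R
      by (auto simp: T_def R_def adm_perms_def)
    have xC: "x \<in> C" using \<sigma>T self_in_cycle[of x \<sigma>] by (auto simp: T_def)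
    have mgc: "mg p = \<sigma> \<circ> \<rho>"
    proof
      fix y show "mg p y = (\<sigma> \<circ> \<rho>) y"
      proof (cases "y \<in> C")
        case True thus ?thesis using \<rho>p by (simp add: mg_def p permutes_not_in)
      next
        case False
        show ?thesis
        proof (cases "y \<in> U")
          case True
          hence "\<rho> y \<in> U - C" using False \<rho>p permutes_in_image by fastforce
          thus ?thesis using False sp by (simp add: mg_def p permutes_not_in)
        next
          case F2: False
          thus ?thesis using False sp \<rho>p by (simp add: mg_def p permutes_not_in)
        qed
      qed
    qed
    have perm: "mg p permutes U" unfolding mgc
      by (rule permutes_compose[OF permutes_subset[OF \<rho>p] permutes_subset[OF sp CU]]) auto
    have adm: "mg p \<in> adm_perms E U"
      using perm \<sigma>T \<rho>R CU unfolding adm_perms_def T_def R_def by (auto simp: mg_def p)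
    have "\<sigma> ` C \<subseteq> C" using sp permutes_image by blast
    hence "\<forall>j. ((mg p)^^j) x = (\<sigma>^^j) x"
      using funpow_agree[of C "mg p" \<sigma> x] xC by (auto simp: mg_def p)
    hence cyc: "cycle_of (mg p) x = C" using \<sigma>T by (simp add: cycle_of_def T_def)
    have r2: "rs (U-C) (mg p) = \<rho>"
      using \<rho>p by (auto simp: rs_def mg_def p fun_eq_iff permutes_not_in)
    have r1: "rs C (mg p) = \<sigma>"
      using sp by (auto simp: rs_def mg_def p fun_eq_iff permutes_not_in)
    have "{y\<in>U. mg p y \<noteq> y} = {y\<in>C. \<sigma> y \<noteq> y} \<union> {y\<in>U-C. \<rho> y \<noteq> y}"
      using CU by (auto simp: mg_def p)
    moreover have "card ({y\<in>C. \<sigma> y \<noteq> y} \<union> {y\<in>U-C. \<rho> y \<noteq> y}) =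
        card {y\<in>C. \<sigma> y \<noteq> y} + card {y\<in>U-C. \<rho> y \<noteq> y}"
      by (rule card_Un_disjoint) (use fin finC in auto)
    ultimately have w: "perm_weight \<alpha> U (mg p) = perm_weight \<alpha> C \<sigma> * perm_weight \<alpha> (U-C) \<rho>"
      unfolding perm_weight_def by (simp add: algebra_simps exp_add[symmetric])
    show ?thesis using adm cyc r1 r2 w by (simp add: SC_def p sp_def)
  qed
  have spprops: "sp \<pi> \<in> T \<times> R \<and> mg (sp \<pi>) = \<pi>" if "\<pi> \<in> SC" for \<pi>
  proof -
    have adm: "\<pi> \<in> adm_perms E U" and cyc: "cycle_of \<pi> x = C" using that by (auto simp: SC_def)
    have pp: "\<pi> permutes U" using adm by (auto simp: adm_perms_def)
    have i1: "\<pi> ` C = C" using cycle_img[OF pp fin xU] cyc by simp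
    have i2: "\<pi> ` (U-C) = U - C" by (rule compl_img[OF pp i1])
    have a1: "rs C \<pi> \<in> adm_perms E C" by (rule rs_adm[OF adm CU i1])
    have a2: "rs (U-C) \<pi> \<in> adm_perms E (U-C)" by (rule rs_adm[OF adm _ i2]) auto
    have "\<forall>j. ((rs C \<pi>)^^j) x = (\<pi>^^j) x"
      using funpow_agree[of C "rs C \<pi>" \<pi> x] i1 cyc self_in_cycle[of x \<pi>] by (auto simp: rs_def)
    hence "cycle_of (rs C \<pi>) x = C" using cyc by (simp add: cycle_of_def)
    moreover have "mg (sp \<pi>) = \<pi>" using pp
      by (auto simp: mg_def sp_def rs_def fun_eq_iff permutes_not_in)
    ultimately show ?thesis using a1 a2 by (simp add: sp_def T_def R_def)
  qed
  have bij: "bij_betw mg (T \<times> R) SC"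
  proof (rule bij_betw_byWitness[where f'=sp])
    show "\<forall>a\<in>T \<times> R. sp (mg a) = a" using mgprops by blast
    show "\<forall>a'\<in>SC. mg (sp a') = a'" using spprops by blast
    show "mg ` (T \<times> R) \<subseteq> SC" using mgprops by blast
    show "sp ` SC \<subseteq> T \<times> R" using spprops by blast
  qed
  have "(\<Sum>\<sigma>\<in>T. perm_weight \<alpha> C \<sigma>) * (\<Sum>\<rho>\<in>R. perm_weight \<alpha> (U-C) \<rho> * G \<rho>)
     = (\<Sum>p\<in>T \<times> R. perm_weight \<alpha> C (fst p) * (perm_weight \<alpha> (U-C) (snd p) * G (snd p)))"
    by (simp add: sum_product sum.cartesian_product case_prod_beta)
  also have "\<dots> = (\<Sum>p\<in>T \<times> R. (\<lambda>\<pi>. perm_weight \<alpha> U \<pi> * G (rs (U-C) \<pi>)) (mg p))"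
    by (rule sum.cong) (use mgprops in auto)
  also have "\<dots> = (\<Sum>\<pi>\<in>SC. perm_weight \<alpha> U \<pi> * G (rs (U-C) \<pi>))"
    by (rule sum.reindex_bij_betw[OF bij])
  finally show ?thesis by (simp add: T_def R_def SC_def)
qed


lemma meas_bind: "measure_pmf.prob (bind_pmf M N) X = measure_pmf.expectation M (\<lambda>x. measure_pmf.prob (N x) X)"
proof -
  have i: "integrable (measure_pmf M) (\<lambda>x. measure_pmf.prob (N x) X)"
    by (rule measure_pmf.integrable_const_bound[where B=1]) auto
  have "ennreal (measure_pmf.prob (bind_pmf M N) X) = emeasure (bind_pmf M N) X"
    by (simp add: measure_pmf.emeasure_eq_measure)
  also have "\<dots> = (\<integral>\<^sup>+x. ennreal (measure_pmf.prob (N x) X) \<partial>M)"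
    by (subst emeasure_bind_pmf) (simp add: measure_pmf.emeasure_eq_measure)
  also have "\<dots> = ennreal (measure_pmf.expectation M (\<lambda>x. measure_pmf.prob (N x) X))"
    by (rule nn_integral_eq_integral[OF i]) auto
  finally show ?thesis by (simp add: integral_nonneg_AE)
qed

lemma intg: "(\<And>x. \<bar>f x\<bar> \<le> B) \<Longrightarrow> integrable (measure_pmf M) (f :: _ \<Rightarrow> real)"
  by (rule measure_pmf.integrable_const_bound[where B=B]) auto

lemma tele: "(\<Sum>i<l. if i < c then h (Suc i) - h i else 0) = h (min c l) - (h 0 :: real)"
proof -
  have "(\<Sum>i<l. if i < c then h (Suc i) - h i else 0) = (\<Sum>i\<in>{i\<in>{..<l}. i < c}. h (Suc i) - h i)"
    by (subst sum.inter_filter) auto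
  also have "{i\<in>{..<l}. i < c} = {..<min c l}" by auto
  finally show ?thesis by (simp add: sum_lessThan_telescope)
qed

definition gg :: "int pmf \<Rightarrow> nat \<Rightarrow> int \<Rightarrow> real" where
  "gg \<xi> n t = measure_pmf.prob (iid_sum \<xi> n) {k. k \<ge> t}"

lemma gg_nonneg: "0 \<le> gg \<xi> n t" by (simp add: gg_def)
lemma gg_le1: "gg \<xi> n t \<le> 1" by (simp add: gg_def)

lemma gg_anti: "t \<le> t' \<Longrightarrow> gg \<xi> n t' \<le> gg \<xi> n t"
  unfolding gg_def by (rule measure_pmf.finite_measure_mono) auto

lemma gg_Suc: "gg \<xi> (Suc n) t = measure_pmf.expectation \<xi> (\<lambda>a. gg \<xi> n (t - a))"
proof -
  have "gg \<xi> (Suc n) t = measure_pmf.expectation \<xi> (\<lambda>a. measure_pmf.prob (iid_sum \<xi> n) ((+) a -` {k. k \<ge> t}))"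
    by (simp add: gg_def meas_bind)
  also have "\<dots> = measure_pmf.expectation \<xi> (\<lambda>a. gg \<xi> n (t - a))"
    by (rule Bochner_Integration.integral_cong) (auto simp: gg_def algebra_simps vimage_def)
  finally show ?thesis .
qed

context
  fixes \<xi> :: "int pmf"
  assumes pos: "set_pmf \<xi> \<subseteq> {1..}"
begin

lemma iid_nonneg: "set_pmf (iid_sum \<xi> n) \<subseteq> {0..}"
  using pos by (induction n) force+

lemma gg_one: "t \<le> 0 \<Longrightarrow> gg \<xi> n t = 1"
  unfolding gg_def using iid_nonneg[of n]
  by (subst measure_pmf.prob_eq_1) (auto intro!: AE_pmfI)

lemma gg_mono_Suc: "gg \<xi> n t \<le> gg \<xi> (Suc n) t"
proof -
  have "gg \<xi> n t = measure_pmf.expectation \<xi> (\<lambda>a. gg \<xi> n t)" by simp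
  also have "\<dots> \<le> measure_pmf.expectation \<xi> (\<lambda>a. gg \<xi> n (t - a))"
  proof (rule integral_mono_AE)
    show "integrable (measure_pmf \<xi>) (\<lambda>a. gg \<xi> n t)" by simp
    show "integrable (measure_pmf \<xi>) (\<lambda>a. gg \<xi> n (t - a))"
      by (rule intg[where B=1]) (simp add: gg_nonneg gg_le1)
    show "AE a in measure_pmf \<xi>. gg \<xi> n t \<le> gg \<xi> n (t - a)"
      using pos by (auto intro!: AE_pmfI gg_anti)
  qed
  finally show ?thesis by (simp add: gg_Suc)
qed

lemma gg_mono: "m \<le> n \<Longrightarrow> gg \<xi> m t \<le> gg \<xi> n t"
  by (induction n) (auto intro: order_trans[OF _ gg_mono_Suc] simp: le_Suc_eq)

lemma gg_layer:
  fixes n l :: nat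
  defines "h \<equiv> (\<lambda>c. gg \<xi> n (int (l - c)))"
  shows "gg \<xi> (Suc n) (int l) = h 0 + (\<Sum>i<l. (h (Suc i) - h i) * measure_pmf.prob \<xi> {k. k \<ge> int (Suc i)})"
proof -
  have pt: "gg \<xi> n (int l - a) = h 0 + (\<Sum>i<l. (h (Suc i) - h i) * indicator {k. k \<ge> int (Suc i)} a)"
    if "a \<in> set_pmf \<xi>" for a
  proof -
    define c where "c = nat a"
    have a: "a = int c" using that pos c_def by auto
    have "(\<Sum>i<l. (h (Suc i) - h i) * indicator {k. k \<ge> int (Suc i)} a)
        = (\<Sum>i<l. if i < c then h (Suc i) - h i else 0)"
      by (rule sum.cong) (auto simp: a indicator_def)
    also have "\<dots> = h (min c l) - h 0" by (rule tele)
    also have "h (min c l) = gg \<xi> n (int l - a)"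
    proof (cases "c \<le> l")
      case True thus ?thesis by (simp add: h_def a of_nat_diff)
    next
      case False thus ?thesis by (simp add: h_def a gg_one)
    qed
    finally show ?thesis by simp
  qed
  have "gg \<xi> (Suc n) (int l) = measure_pmf.expectation \<xi>
      (\<lambda>a. h 0 + (\<Sum>i<l. (h (Suc i) - h i) * indicator {k. k \<ge> int (Suc i)} a))"
    unfolding gg_Suc by (rule integral_cong_AE) (simp, simp, rule AE_pmfI, erule pt)
  also have "\<dots> = h 0 + (\<Sum>i<l. measure_pmf.expectation \<xi> (\<lambda>a. (h (Suc i) - h i) * indicator {k. k \<ge> int (Suc i)} a))"
  proof -
    define f where "f = (\<lambda>i a. (h (Suc i) - h i) * indicator {k. k \<ge> int (Suc i)} a :: real)"
    have ii: "integrable (measure_pmf \<xi>) (f i)" for i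
      unfolding f_def by (intro integrable_mult_right integrable_real_indicator) (auto simp: measure_pmf.emeasure_eq_measure)
    have "measure_pmf.expectation \<xi> (\<lambda>a. h 0 + (\<Sum>i<l. f i a))
        = measure_pmf.expectation \<xi> (\<lambda>a. h 0) + measure_pmf.expectation \<xi> (\<lambda>a. \<Sum>i<l. f i a)"
      by (rule Bochner_Integration.integral_add) (auto intro: ii)
    also have "measure_pmf.expectation \<xi> (\<lambda>a. \<Sum>i<l. f i a) = (\<Sum>i<l. measure_pmf.expectation \<xi> (f i))"
      by (rule Bochner_Integration.integral_sum) (auto intro: ii)
    finally show ?thesis by (simp add: f_def)
  qed
  also have "\<dots> = h 0 + (\<Sum>i<l. (h (Suc i) - h i) * measure_pmf.prob \<xi> {k. k \<ge> int (Suc i)})"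
    by simp
  finally show ?thesis .
qed

end

lemma Or_decomp:
  assumes adm: "\<pi> \<in> adm_perms E U" and fin: "finite U" and xA: "x \<in> A" and AU: "A \<subseteq> U"
    and C: "C = cycle_of \<pi> x"
  shows "card (Or \<pi> A) = card C + card (Or (rs (U-C) \<pi>) (A - C))"
proof -
  have pp: "\<pi> permutes U" using adm by (auto simp: adm_perms_def)
  have xU: "x \<in> U" using xA AU by auto
  have i1: "\<pi> ` C = C" using cycle_img[OF pp fin xU] C by simp
  have i2: "\<pi> ` (U-C) = U - C" by (rule compl_img[OF pp i1])
  have CU: "C \<subseteq> U" using cycle_sub[OF pp xU] C by simp
  have rp: "rs (U-C) \<pi> permutes (U-C)" by (rule rs_permutes[OF pp _ i2]) auto
  have ri: "rs (U-C) \<pi> ` (U-C) \<subseteq> U - C" using rp permutes_image by blast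
  have eq: "Or \<pi> A = C \<union> Or (rs (U-C) \<pi>) (A - C)"
  proof (rule set_eqI, rule iffI)
    fix z assume "z \<in> Or \<pi> A"
    then obtain y j where z: "z = (\<pi>^^j) y" and yA: "y \<in> A" unfolding Or_def by auto
    show "z \<in> C \<union> Or (rs (U-C) \<pi>) (A - C)"
    proof (cases "y \<in> C")
      case True thus ?thesis using funpow_in[of \<pi> C y j] i1 z by auto
    next
      case False
      have "(\<pi>^^j) y = ((rs (U-C) \<pi>)^^j) y"
        using funpow_agree[of "U-C" \<pi> "rs (U-C) \<pi>" y j] ri False yA AU by (auto simp: rs_def)
      thus ?thesis using z yA False unfolding Or_def by blast
    qed
  next
    fix z assume "z \<in> C \<union> Or (rs (U-C) \<pi>) (A - C)"
    thus "z \<in> Or \<pi> A"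
    proof
      assume "z \<in> C"
      then obtain j where "z = (\<pi>^^j) x" using C unfolding cycle_of_def by auto
      thus ?thesis using xA unfolding Or_def by blast
    next
      assume "z \<in> Or (rs (U-C) \<pi>) (A - C)"
      then obtain y j where z: "z = ((rs (U-C) \<pi>)^^j) y" and yA: "y \<in> A - C" unfolding Or_def by auto
      have "(\<pi>^^j) y = ((rs (U-C) \<pi>)^^j) y"
        using funpow_agree[of "U-C" \<pi> "rs (U-C) \<pi>" y j] ri yA AU by (auto simp: rs_def)
      thus ?thesis using z yA unfolding Or_def by (metis (mono_tags, lifting) DiffD1 mem_Collect_eq)
    qed
  qed
  have sub: "Or (rs (U-C) \<pi>) (A - C) \<subseteq> U - C" by (rule Or_sub[OF rp]) (use AU in auto)
  have finC: "finite C" using CU fin finite_subset by blast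
  have finO: "finite (Or (rs (U-C) \<pi>) (A - C))" using sub fin finite_subset by blast
  show ?thesis unfolding eq by (rule card_Un_disjoint[OF finC finO]) (use sub in auto)
qed

lemma sum_ind: "finite S \<Longrightarrow> (\<Sum>x\<in>{x\<in>S. P x}. f x) = (\<Sum>x\<in>S. f x * (if P x then 1 else 0 :: real))"
  by (subst sum.inter_filter) (auto intro: sum.cong)

lemma pp_def2: "finite U \<Longrightarrow> (\<Sum>\<pi>\<in>adm_perms E U. perm_weight \<alpha> U \<pi> * (if P \<pi> then 1 else 0))
   = part_fun \<alpha> E U * perm_prob \<alpha> E U P"
  using part_fun_pos[of U \<alpha> E] by (simp add: perm_prob_def sum_ind[symmetric] finite_adm)

lemma empty_case:
  assumes "finite U" "set_pmf \<xi> \<subseteq> {1..}"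
  shows "perm_prob \<alpha> E U (\<lambda>\<pi>. l \<le> card (Or \<pi> {})) \<le> gg \<xi> n (int l)"
proof (cases "l = 0")
  case True
  have "perm_prob \<alpha> E U (\<lambda>\<pi>. l \<le> card (Or \<pi> {})) = 1"
    using True part_fun_pos[of U \<alpha> E] assms(1) by (simp add: perm_prob_def part_fun_def)
  thus ?thesis using gg_one[OF assms(2)] True by simp
next
  case False
  hence "perm_prob \<alpha> E U (\<lambda>\<pi>. l \<le> card (Or \<pi> {})) = 0" by (simp add: perm_prob_def Or_def)
  thus ?thesis by (simp add: gg_nonneg)
qed

lemma step:
  fixes V :: "'a set" and \<xi> :: "int pmf"
  assumes finV: "finite V" and cb: "cycle_length_bounded \<alpha> V E \<xi>" and pos: "set_pmf \<xi> \<subseteq> {1..}"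
    and IH: "\<And>U A l. U \<subseteq> V \<Longrightarrow> A \<subseteq> U \<Longrightarrow> card A \<le> n \<Longrightarrow>
       perm_prob \<alpha> E U (\<lambda>\<pi>. l \<le> card (Or \<pi> A)) \<le> gg \<xi> n (int l)"
    and UV: "U \<subseteq> V" and AU: "A \<subseteq> U" and cA: "card A \<le> Suc n" and xA: "x \<in> A"
  shows "perm_prob \<alpha> E U (\<lambda>\<pi>. l \<le> card (Or \<pi> A)) \<le> gg \<xi> (Suc n) (int l)"
proof -
  have finU: "finite U" using UV finV finite_subset by blast
  have finA: "finite A" using AU finU finite_subset by blast
  have xU: "x \<in> U" using xA AU by auto
  define Z where "Z = part_fun \<alpha> E U"
  have Zpos: "Z > 0" unfolding Z_def by (rule part_fun_pos[OF finU])
  define h where "h = (\<lambda>c. gg \<xi> n (int (l - c)))"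
  define w where "w = perm_weight \<alpha> U"
  define ind where "ind = (\<lambda>\<pi>. if l \<le> card (Or \<pi> A) then 1 else (0::real))"
  define SC where "SC = (\<lambda>C. {\<pi>. \<pi> \<in> adm_perms E U \<and> cycle_of \<pi> x = C})"
  have perC: "(\<Sum>\<pi>\<in>SC C. w \<pi> * ind \<pi>) \<le> (\<Sum>\<pi>\<in>SC C. w \<pi> * h (card (cycle_of \<pi> x)))"
    if CU: "C \<in> Pow U" for C
  proof (cases "x \<in> C")
    case False
    hence "SC C = {}" using self_in_cycle[of x] by (auto simp: SC_def)
    thus ?thesis by simp
  next
    case True
    have CU': "C \<subseteq> U" using CU by auto
    define WT where "WT = (\<Sum>\<sigma>\<in>{\<sigma>\<in>adm_perms E C. cycle_of \<sigma> x = C}. perm_weight \<alpha> C \<sigma>)"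
    have WT0: "WT \<ge> 0" unfolding WT_def by (rule sum_nonneg) (simp add: weight_pos less_imp_le)
    define G where "G = (\<lambda>\<rho>. if l - card C \<le> card (Or \<rho> (A - C)) then 1 else (0::real))"
    have "(\<Sum>\<pi>\<in>SC C. w \<pi> * ind \<pi>) = (\<Sum>\<pi>\<in>SC C. perm_weight \<alpha> U \<pi> * G (rs (U-C) \<pi>))"
    proof (rule sum.cong[OF refl])
      fix \<pi> assume "\<pi> \<in> SC C"
      hence "\<pi> \<in> adm_perms E U" "C = cycle_of \<pi> x" by (auto simp: SC_def)
      from Or_decomp[OF this(1) finU xA AU this(2)]
      show "w \<pi> * ind \<pi> = perm_weight \<alpha> U \<pi> * G (rs (U-C) \<pi>)"
        by (simp add: w_def ind_def G_def) linarith
    qed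
    also have "\<dots> = WT * (\<Sum>\<rho>\<in>adm_perms E (U-C). perm_weight \<alpha> (U-C) \<rho> * G \<rho>)"
      unfolding SC_def WT_def by (rule markov[OF finU xU CU'])
    also have "(\<Sum>\<rho>\<in>adm_perms E (U-C). perm_weight \<alpha> (U-C) \<rho> * G \<rho>)
        = part_fun \<alpha> E (U-C) * perm_prob \<alpha> E (U-C) (\<lambda>\<rho>. l - card C \<le> card (Or \<rho> (A - C)))"
      unfolding G_def by (rule pp_def2) (use finU in auto)
    also have "perm_prob \<alpha> E (U-C) (\<lambda>\<rho>. l - card C \<le> card (Or \<rho> (A - C))) \<le> h (card C)"
    proof -
      have "card (A - C) < card A"
        by (rule psubset_card_mono[OF finA]) (use xA True in auto)
      hence "card (A - C) \<le> n" using cA by simp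
      thus ?thesis unfolding h_def by (intro IH) (use UV AU in auto)
    qed
    hence "WT * (part_fun \<alpha> E (U-C) * perm_prob \<alpha> E (U-C) (\<lambda>\<rho>. l - card C \<le> card (Or \<rho> (A - C))))
        \<le> WT * (part_fun \<alpha> E (U-C) * h (card C))"
      using WT0 part_fun_pos[of "U-C" \<alpha> E] finU by (intro mult_left_mono) auto
    also have "WT * (part_fun \<alpha> E (U-C) * h (card C)) = (\<Sum>\<pi>\<in>SC C. perm_weight \<alpha> U \<pi> * (\<lambda>_. 1) (rs (U-C) \<pi>)) * h (card C)"
      unfolding SC_def WT_def by (subst markov[OF finU xU CU']) (simp add: part_fun_def)
    also have "\<dots> = (\<Sum>\<pi>\<in>SC C. w \<pi> * h (card (cycle_of \<pi> x)))"
      by (simp add: sum_distrib_right SC_def w_def)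
    finally show ?thesis .
  qed
  have img: "(\<lambda>\<pi>. cycle_of \<pi> x) ` adm_perms E U \<subseteq> Pow U"
    using cycle_sub[OF _ xU] by (auto simp: adm_perms_def)
  have "(\<Sum>\<pi>\<in>adm_perms E U. w \<pi> * ind \<pi>) = (\<Sum>C\<in>Pow U. \<Sum>\<pi>\<in>SC C. w \<pi> * ind \<pi>)"
    unfolding SC_def by (rule sum.group[symmetric, OF finite_adm[OF finU] _ img]) (use finU in auto)
  also have "\<dots> \<le> (\<Sum>C\<in>Pow U. \<Sum>\<pi>\<in>SC C. w \<pi> * h (card (cycle_of \<pi> x)))"
    by (rule sum_mono) (rule perC)
  also have "\<dots> = (\<Sum>\<pi>\<in>adm_perms E U. w \<pi> * h (card (cycle_of \<pi> x)))"
    unfolding SC_def by (rule sum.group[OF finite_adm[OF finU] _ img]) (use finU in auto)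
  also have "\<dots> \<le> Z * gg \<xi> (Suc n) (int l)"
  proof -
    define cg where "cg = (\<lambda>\<pi>. card (cycle_of \<pi> x))"
    define d where "d = (\<lambda>i. h (Suc i) - h i)"
    define P where "P = (\<lambda>i. measure_pmf.prob \<xi> {k. k \<ge> int (Suc i)})"
    have d0: "d i \<ge> 0" for i unfolding d_def h_def by (simp add: gg_anti)
    have hc: "h c = h 0 + (\<Sum>i<l. if i < c then d i else 0)" for c
    proof -
      have "h (min c l) = h c" unfolding h_def by (simp add: min_def)
      thus ?thesis using tele[where l=l and c=c and h=h] unfolding d_def by linarith
    qed
    have "(\<Sum>\<pi>\<in>adm_perms E U. w \<pi> * h (cg \<pi>))
        = (\<Sum>\<pi>\<in>adm_perms E U. w \<pi> * h 0 + (\<Sum>i<l. d i * (w \<pi> * (if i < cg \<pi> then 1 else 0))))"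
      by (rule sum.cong[OF refl]) (simp add: hc[of "cg _"] ring_distribs sum_distrib_left if_distrib mult.commute cong: if_cong)
    also have "\<dots> = Z * h 0 + (\<Sum>i<l. d i * (\<Sum>\<pi>\<in>adm_perms E U. w \<pi> * (if i < cg \<pi> then 1 else 0)))"
      by (simp add: sum.distrib sum_distrib_left sum_distrib_right[symmetric] Z_def part_fun_def w_def)
        (rule sum.swap)
    also have "\<dots> \<le> Z * h 0 + (\<Sum>i<l. d i * (Z * P i))"
    proof (intro add_left_mono sum_mono mult_left_mono d0)
      fix i
      have "(\<Sum>\<pi>\<in>adm_perms E U. w \<pi> * (if i < cg \<pi> then 1 else 0))
          = Z * perm_prob \<alpha> E U (\<lambda>\<pi>. Suc i \<le> card (cycle_of \<pi> x))"
        unfolding w_def Z_def cg_def by (subst pp_def2[OF finU, symmetric]) (simp add: Suc_le_eq)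
      also have "perm_prob \<alpha> E U (\<lambda>\<pi>. Suc i \<le> card (cycle_of \<pi> x)) \<le> P i"
        using cb UV finU xU unfolding cycle_length_bounded_def P_def
        by (auto dest!: spec[where x="Suc i"])
      hence "Z * perm_prob \<alpha> E U (\<lambda>\<pi>. Suc i \<le> card (cycle_of \<pi> x)) \<le> Z * P i"
        using Zpos by simp
      finally show "(\<Sum>\<pi>\<in>adm_perms E U. w \<pi> * (if i < cg \<pi> then 1 else 0)) \<le> Z * P i" .
    qed
    also have "\<dots> = Z * (h 0 + (\<Sum>i<l. d i * P i))"
      by (simp add: ring_distribs sum_distrib_left mult.left_commute)
    also have "h 0 + (\<Sum>i<l. d i * P i) = gg \<xi> (Suc n) (int l)"
      using gg_layer[OF pos, of n l] by (simp add: h_def d_def P_def)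
    finally show ?thesis unfolding cg_def .
  qed
  finally have N: "(\<Sum>\<pi>\<in>adm_perms E U. w \<pi> * ind \<pi>) \<le> Z * gg \<xi> (Suc n) (int l)" .
  have "(\<Sum>\<pi>\<in>adm_perms E U. w \<pi> * ind \<pi>) = Z * perm_prob \<alpha> E U (\<lambda>\<pi>. l \<le> card (Or \<pi> A))"
    unfolding w_def ind_def Z_def by (rule pp_def2[OF finU])
  thus ?thesis using N Zpos by simp
qed

lemma derive_pos:
  assumes cb: "cycle_length_bounded \<alpha> V E \<xi>" and vV: "v \<in> V"
  shows "set_pmf \<xi> \<subseteq> {1..}"
proof -
  have "perm_prob \<alpha> E {v} (\<lambda>\<pi>. 1 \<le> card (cycle_of \<pi> v)) \<le> measure_pmf.prob \<xi> {k. k \<ge> int 1}"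
    using cb vV unfolding cycle_length_bounded_def by (auto dest!: spec[where x="1::nat"])
  moreover have "perm_prob \<alpha> E {v} (\<lambda>\<pi>. 1 \<le> card (cycle_of \<pi> v)) = 1"
  proof -
    have "{\<pi> \<in> adm_perms E {v}. 1 \<le> card (cycle_of \<pi> v)} = adm_perms E {v}"
    proof (auto)
      fix \<pi> assume "\<pi> \<in> adm_perms E {v}"
      hence "cycle_of \<pi> v \<subseteq> {v}" using cycle_sub[of \<pi> "{v}" v] by (auto simp: adm_perms_def)
      hence "finite (cycle_of \<pi> v)" using finite_subset by blast
      thus "Suc 0 \<le> card (cycle_of \<pi> v)" using self_in_cycle[of v \<pi>]
        by (metis Suc_leI card_gt_0_iff empty_iff)
    qed
    thus ?thesis using part_fun_pos[of "{v}" \<alpha> E] by (simp add: perm_prob_def part_fun_def)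
  qed
  ultimately have "measure_pmf.prob \<xi> {k. k \<ge> 1} = 1"
    using measure_pmf.measure_ge_1_iff by force
  hence "AE k in measure_pmf \<xi>. k \<in> {k. k \<ge> 1}" by (rule measure_pmf.AE_prob_1)
  thus ?thesis by (auto simp: AE_measure_pmf_iff)
qed

theorem proposition4p7:
  fixes V :: "'a set" and E :: "'a set set" and \<alpha> :: real and \<xi> :: "int pmf"
    and A :: "'a set" and l :: nat
  assumes "finite V"
    and "E \<subseteq> {{x, y} | x y. x \<in> V \<and> y \<in> V}"
    and "cycle_length_bounded \<alpha> V E \<xi>"
    and "A \<subseteq> V"
  shows "perm_prob \<alpha> E V (\<lambda>\<pi>. card (Or \<pi> A) \<ge> l)
           \<le> measure_pmf.prob (iid_sum \<xi> (card A)) {k. k \<ge> int l}"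
proof (cases "A = {}")
  case True
  show ?thesis
  proof (cases "l = 0")
    case True
    have "perm_prob \<alpha> E V (\<lambda>\<pi>. card (Or \<pi> A) \<ge> l) = 1"
      using True part_fun_pos[of V \<alpha> E] assms(1) by (simp add: perm_prob_def part_fun_def)
    thus ?thesis using True \<open>A = {}\<close> by simp
  next
    case False
    hence "perm_prob \<alpha> E V (\<lambda>\<pi>. card (Or \<pi> A) \<ge> l) = 0" using \<open>A = {}\<close>
      by (simp add: perm_prob_def Or_def)
    thus ?thesis by simp
  qed
next
  case False
  then obtain v where "v \<in> A" by blast
  hence pos: "set_pmf \<xi> \<subseteq> {1..}" using derive_pos[OF assms(3)] assms(4) by blast
  have claim: "\<forall>U A l. U \<subseteq> V \<longrightarrow> A \<subseteq> U \<longrightarrow> card A \<le> n \<longrightarrow>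
       perm_prob \<alpha> E U (\<lambda>\<pi>. l \<le> card (Or \<pi> A)) \<le> gg \<xi> n (int l)" for n
  proof (induction n)
    case 0
    show ?case
    proof (intro allI impI)
      fix U A l assume UV: "U \<subseteq> V" and AU: "A \<subseteq> U" and c: "card A \<le> 0"
      have finU: "finite U" using UV assms(1) finite_subset by blast
      hence "A = {}" using AU c finite_subset by fastforce
      thus "perm_prob \<alpha> E U (\<lambda>\<pi>. l \<le> card (Or \<pi> A)) \<le> gg \<xi> 0 (int l)"
        using empty_case[OF finU pos] by simp
    qed
  next
    case (Suc n)
    show ?case
    proof (intro allI impI)
      fix U A l assume UV: "U \<subseteq> V" and AU: "A \<subseteq> U" and c: "card A \<le> Suc n"
      have finU: "finite U" using UV assms(1) finite_subset by blast
      show "perm_prob \<alpha> E U (\<lambda>\<pi>. l \<le> card (Or \<pi> A)) \<le> gg \<xi> (Suc n) (int l)"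
      proof (cases "A = {}")
        case True thus ?thesis using empty_case[OF finU pos] by simp
      next
        case False
        then obtain x where "x \<in> A" by blast
        show ?thesis
          by (rule step[OF assms(1,3) pos _ UV AU c \<open>x \<in> A\<close>]) (use Suc.IH in blast)
      qed
    qed
  qed
  show ?thesis using claim[of "card A"] assms(4) by (auto simp: gg_def)
qed

end
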